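(* Let $k\ge 2$ be an integer. Then $\frac{k}{k+1}\le f(k,2)\le \frac{k+1}{k+2+\frac{1}{k+1}}$.
   Context: For a graph $G=(V,E)$ and an integer $k\ge 0$, a $k$-independent set is a set $S\subseteq V$ such that the induced subgraph $G[S]$ has maximum degree at most $k$; $\alpha_k(G)$ denotes the maximum cardinality of a $k$-independent set of $G$. $n(G)$ is the number of vertices and $d(G)=2|E(G)|/n(G)$ the average degree. For integers $d,k\ge 0$, $f(k,d)=\inf\left\{\frac{\alpha_k(G)}{n(G)} : G \text{ a finite simple graph with at least one vertex and } d(G)\le d\right\}$. *)

theory Defs
  imports Main Complex_Main
begin

definition simple_graph :: "'a set \<Rightarrow> 'a set set \<Rightarrow> bool" where
  "simple_graph V E \<longleftrightarrow> finite V \<and> (\<forall>e\<in>E. e \<subseteq> V \<and> card e = 2)"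

definition k_independent :: "'a set \<Rightarrow> 'a set set \<Rightarrow> nat \<Rightarrow> 'a set \<Rightarrow> bool" where
  "k_independent V E k S \<longleftrightarrow> S \<subseteq> V \<and> (\<forall>v\<in>S. card {w\<in>S. {v, w} \<in> E} \<le> k)"

definition alpha_k :: "'a set \<Rightarrow> 'a set set \<Rightarrow> nat \<Rightarrow> nat" where
  "alpha_k V E k = Max (card ` {S. k_independent V E k S})"

definition avg_degree :: "'a set \<Rightarrow> 'a set set \<Rightarrow> real" where
  "avg_degree V E = 2 * real (card E) / real (card V)"

text \<open>Infimum over all finite simple graphs with at least one vertex; every finite graph is
  isomorphic to one with vertices in nat, so vertices are taken from nat.\<close>
definition f_kd :: "nat \<Rightarrow> nat \<Rightarrow> real" where
  "f_kd k d = Inf {real (alpha_k V E k) / real (card V) | (V :: nat set) E.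
                    simple_graph V E \<and> V \<noteq> {} \<and> avg_degree V E \<le> real d}"

end

theory Submission
  imports Defs
begin

lemma greedy:
  assumes "finite S" "finite E"
  shows "\<exists>T\<subseteq>S. (\<forall>v\<in>T. card {w\<in>T. {v,w}\<in>E} \<le> k) \<and>
           (k+1)*(card S - card T) \<le> card {e\<in>E. e \<subseteq> S}"
  using assms(1)
proof (induction S rule: finite_psubset_induct)
  case (psubset S)
  show ?case
  proof (cases "\<forall>v\<in>S. card {w\<in>S. {v,w}\<in>E} \<le> k")
    case True
    then show ?thesis by (intro exI[of _ S]) auto
  next
    case False
    then obtain v where v: "v \<in> S" "card {w\<in>S. {v,w}\<in>E} > k" by (auto simp: not_le)
    define N where "N = {w\<in>S. {v,w}\<in>E}"
    have "S - {v} \<subset> S" using v by auto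
    from psubset.IH[OF this] obtain T where T: "T \<subseteq> S - {v}"
      "\<forall>v\<in>T. card {w\<in>T. {v,w}\<in>E} \<le> k"
      "(k+1)*(card (S-{v}) - card T) \<le> card {e\<in>E. e \<subseteq> S - {v}}" by blast
    have fS: "finite (S - {v})" using psubset.hyps by auto
    have cT: "card T \<le> card (S - {v})" using T(1) fS card_mono by blast
    have cS: "card S = card (S - {v}) + 1" using v psubset.hyps
      by (metis Suc_eq_plus1 card_Suc_Diff1)
    have inj: "inj_on (\<lambda>w. {v,w}) N" by (auto simp: inj_on_def doubleton_eq_iff)
    have sub: "{e\<in>E. e \<subseteq> S - {v}} \<union> (\<lambda>w. {v,w}) ` N \<subseteq> {e\<in>E. e \<subseteq> S}"
      using v(1) by (auto simp: N_def)
    have disj: "{e\<in>E. e \<subseteq> S - {v}} \<inter> (\<lambda>w. {v,w}) ` N = {}" by auto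
    have fin: "finite {e\<in>E. e \<subseteq> S}" using assms(2) by auto
    have "card {e\<in>E. e \<subseteq> S - {v}} + card N \<le> card {e\<in>E. e \<subseteq> S}"
    proof -
      have "card {e\<in>E. e \<subseteq> S - {v}} + card N
          = card ({e\<in>E. e \<subseteq> S - {v}} \<union> (\<lambda>w. {v,w}) ` N)"
        using disj inj fin sub
        by (subst card_Un_disjoint) (auto intro: finite_subset simp: card_image)
      also have "\<dots> \<le> card {e\<in>E. e \<subseteq> S}" using card_mono[OF fin sub] .
      finally show ?thesis .
    qed
    moreover have "card N \<ge> k+1" using v(2) N_def by simp
    ultimately have "(k+1)*(card S - card T) \<le> card {e\<in>E. e \<subseteq> S}"
      using T(3) cT cS by (simp add: algebra_simps)
    then show ?thesis using T by (intro exI[of _ T]) auto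
  qed
qed

lemma alpha_facts:
  assumes "finite V"
  shows "finite (card ` {S. k_independent V E k S})"
    and "card ` {S. k_independent V E k S} \<noteq> {}"
proof -
  have "{S. k_independent V E k S} \<subseteq> Pow V" by (auto simp: k_independent_def)
  then show "finite (card ` {S. k_independent V E k S})"
    using assms by (meson finite_Pow_iff finite_imageI rev_finite_subset)
  have "k_independent V E k {}" by (simp add: k_independent_def)
  then show "card ` {S. k_independent V E k S} \<noteq> {}" by blast
qed

lemma lower:
  assumes "simple_graph V E" "V \<noteq> {}" "avg_degree V E \<le> 2"
  shows "real k / real (k+1) \<le> real (alpha_k V E k) / real (card V)"
proof -
  have fV: "finite V" using assms(1) by (simp add: simple_graph_def)
  have EP: "E \<subseteq> Pow V" using assms(1) by (auto simp: simple_graph_def)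
  hence fE: "finite E" using fV by (meson finite_Pow_iff rev_finite_subset)
  have pos: "card V > 0" using fV assms(2) by (simp add: card_gt_0_iff)
  have cE: "card E \<le> card V"
    using assms(3) pos by (simp add: avg_degree_def divide_le_eq)
  obtain T where T: "T \<subseteq> V" "\<forall>v\<in>T. card {w\<in>T. {v,w}\<in>E} \<le> k"
    "(k+1)*(card V - card T) \<le> card {e\<in>E. e \<subseteq> V}"
    using greedy[OF fV fE, of k] by blast
  have "{e\<in>E. e \<subseteq> V} = E" using EP by auto
  with T(3) cE have A: "(k+1)*(card V - card T) \<le> card V" by simp
  have cT: "card T \<le> card V" using T(1) fV card_mono by blast
  have "k_independent V E k T" using T by (simp add: k_independent_def)
  hence "card T \<le> alpha_k V E k" unfolding alpha_k_def
    using alpha_facts[OF fV, of E k] by (intro Max_ge) auto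
  moreover have "real k * real (card V) \<le> real (k+1) * real (card T)"
  proof -
    have "real (k+1) * (real (card V) - real (card T)) \<le> real (card V)"
      using A cT by (metis of_nat_diff of_nat_le_iff of_nat_mult)
    then show ?thesis by (simp add: algebra_simps)
  qed
  ultimately have "real k * real (card V) \<le> real (k+1) * real (alpha_k V E k)"
    by (smt (verit) of_nat_0_le_iff of_nat_le_iff mult_left_mono)
  then show ?thesis using pos by (simp add: divide_simps) (simp add: algebra_simps)
qed

definition Vg :: "nat \<Rightarrow> nat set" where
  "Vg k = {..<(k+1)*(k+2)+1}"

definition Eg :: "nat \<Rightarrow> nat set set" where
  "Eg k = (\<lambda>(i,j). {i*(k+2), i*(k+2)+j}) ` ({..k} \<times> {1..k+1})
        \<union> (\<lambda>j. {(k+1)*(k+2), k*(k+2)+j}) ` {..k+1}"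

lemma Eg_star: "i \<le> k \<Longrightarrow> i*(k+2) < w \<Longrightarrow> w < i*(k+2)+(k+2) \<Longrightarrow> {i*(k+2), w} \<in> Eg k"
  unfolding Eg_def
  apply (rule UnI1)
  apply (rule image_eqI[where x="(i, w - i*(k+2))"])
   apply auto
  done

lemma Eg_z: "k*(k+2) \<le> w \<Longrightarrow> w < k*(k+2)+(k+2) \<Longrightarrow> {(k+1)*(k+2), w} \<in> Eg k"
  unfolding Eg_def
  apply (rule UnI2)
  apply (rule image_eqI[where x="w - k*(k+2)"])
   apply auto
  done

lemma Eg_uz: "{k*(k+2), (k+1)*(k+2)} \<in> Eg k"
  using Eg_z[of k "k*(k+2)"] by (simp add: insert_commute)

lemma nbr_bound:
  assumes "k_independent V E k S" "v \<in> S" "A \<subseteq> S" "\<And>w. w \<in> A \<Longrightarrow> {v,w} \<in> E" "finite V"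
  shows "card A \<le> k"
proof -
  have "A \<subseteq> {w\<in>S. {v,w}\<in>E}" using assms by auto
  moreover have "finite S" using assms(1,5) by (auto simp: k_independent_def intro: finite_subset)
  ultimately have "card A \<le> card {w\<in>S. {v,w}\<in>E}" by (intro card_mono) auto
  also have "\<dots> \<le> k" using assms(1,2) by (auto simp: k_independent_def)
  finally show ?thesis .
qed

lemma block_bound:
  assumes "k_independent (Vg k) (Eg k) k S" "i < k"
  shows "card (S \<inter> {i*(k+2)..<i*(k+2)+(k+2)}) \<le> k+1"
proof -
  let ?c = "i*(k+2)"
  let ?L = "{?c+1..<?c+(k+2)}"
  have fV: "finite (Vg k)" by (simp add: Vg_def)
  have cL: "card ?L = k+1" by simp
  show ?thesis
  proof (cases "?c \<in> S")
    case True
    have nb: "{?c, w} \<in> Eg k" if "w \<in> S \<inter> ?L" for w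
      using that assms(2) by (intro Eg_star) auto
    have "card (S \<inter> ?L) \<le> k"
      by (rule nbr_bound[OF assms(1) True _ nb fV]) auto
    moreover have "S \<inter> {?c..<?c+(k+2)} \<subseteq> insert ?c (S \<inter> ?L)" by auto
    hence "card (S \<inter> {?c..<?c+(k+2)}) \<le> card (insert ?c (S \<inter> ?L))"
      by (intro card_mono) auto
    moreover have "card (insert ?c (S \<inter> ?L)) \<le> card (S \<inter> ?L) + 1"
      by (simp add: card_insert_if)
    ultimately show ?thesis by linarith
  next
    case False
    have "S \<inter> {?c..<?c+(k+2)} \<subseteq> ?L" using False by (auto simp: le_less Suc_le_eq)
    hence "card (S \<inter> {?c..<?c+(k+2)}) \<le> card ?L" by (intro card_mono) auto
    then show ?thesis using cL by linarith
  qed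
qed


lemma card_ins_le: "finite A \<Longrightarrow> card (insert x A) \<le> card A + 1"
  by (simp add: card_insert_if)

lemma gadget_bound:
  assumes ind: "k_independent (Vg k) (Eg k) k S"
  shows "card (S \<inter> ({k*(k+2)..<k*(k+2)+(k+2)} \<union> {(k+1)*(k+2)})) \<le> k+1"
proof -
  let ?u = "k*(k+2)" and ?z = "(k+1)*(k+2)"
  let ?X = "{?u+1..<?u+(k+2)}"
  let ?G = "{?u..<?u+(k+2)} \<union> {?z}"
  have fV: "finite (Vg k)" by (simp add: Vg_def)
  have zX: "?z \<notin> ?X" by (auto simp: algebra_simps)
  have cX: "card ?X = k+1" by simp
  have fX: "finite (S \<inter> ?X)" by simp
  have nu: "{?u, w} \<in> Eg k" if "w \<in> S \<inter> ?X" for w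
    using that by (intro Eg_star) auto
  have nz: "{?z, w} \<in> Eg k" if "w \<in> S \<inter> ?X" for w
    using that by (intro Eg_z) auto
  have GX: "S \<inter> ?G \<subseteq> insert ?u (insert ?z (S \<inter> ?X))"
    by (auto simp: le_less Suc_le_eq)
  show ?thesis
  proof (cases "?u \<in> S")
    case uS: True
    show ?thesis
    proof (cases "?z \<in> S")
      case zS: True
      have nuz: "{?u, w} \<in> Eg k" if "w \<in> insert ?z (S \<inter> ?X)" for w
        using that nu Eg_uz by auto
      have "card (insert ?z (S \<inter> ?X)) \<le> k"
        by (rule nbr_bound[OF ind uS _ nuz fV]) (use zS in auto)
      moreover have "card (S \<inter> ?G) \<le> card (insert ?u (insert ?z (S \<inter> ?X)))"
        using GX by (intro card_mono) auto
      moreover have "card (insert ?u (insert ?z (S \<inter> ?X))) \<le> card (insert ?z (S \<inter> ?X)) + 1"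
        by (rule card_ins_le) simp
      ultimately show ?thesis by linarith
    next
      case zS: False
      have "card (S \<inter> ?X) \<le> k"
        by (rule nbr_bound[OF ind uS _ nu fV]) auto
      moreover have "S \<inter> ?G \<subseteq> insert ?u (S \<inter> ?X)" using GX zS by auto
      hence "card (S \<inter> ?G) \<le> card (insert ?u (S \<inter> ?X))" by (intro card_mono) auto
      moreover have "card (insert ?u (S \<inter> ?X)) \<le> card (S \<inter> ?X) + 1"
        by (rule card_ins_le) simp
      ultimately show ?thesis by linarith
    qed
  next
    case uS: False
    show ?thesis
    proof (cases "?z \<in> S")
      case zS: True
      have "card (S \<inter> ?X) \<le> k"
        by (rule nbr_bound[OF ind zS _ nz fV]) auto
      moreover have "S \<inter> ?G \<subseteq> insert ?z (S \<inter> ?X)" using GX uS by auto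
      hence "card (S \<inter> ?G) \<le> card (insert ?z (S \<inter> ?X))" by (intro card_mono) auto
      moreover have "card (insert ?z (S \<inter> ?X)) \<le> card (S \<inter> ?X) + 1"
        by (rule card_ins_le) simp
      ultimately show ?thesis by linarith
    next
      case zS: False
      have "S \<inter> ?G \<subseteq> ?X" using GX uS zS by auto
      hence "card (S \<inter> ?G) \<le> card ?X" by (intro card_mono) auto
      then show ?thesis using cX by linarith
    qed
  qed
qed

lemma cover:
  assumes "v \<in> Vg k"
  shows "v \<in> (\<Union>i<k. {i*(k+2)..<i*(k+2)+(k+2)}) \<union> ({k*(k+2)..<k*(k+2)+(k+2)} \<union> {(k+1)*(k+2)})"
proof -
  define q where "q = v div (k+2)"
  define r where "r = v mod (k+2)"
  have v: "v = q*(k+2) + r" unfolding q_def r_def by (rule div_mult_mod_eq[symmetric])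
  have r: "r < k+2" by (simp add: r_def)
  have vN: "v < (k+1)*(k+2)+1" using assms by (simp add: Vg_def)
  consider "q < k" | "q = k" | "q \<ge> k+1" by linarith
  then show ?thesis
  proof cases
    case 1
    then have "v \<in> {q*(k+2)..<q*(k+2)+(k+2)}" using v r by simp
    then show ?thesis using 1 by blast
  next
    case 2
    then show ?thesis using v r by simp
  next
    case 3
    then have "(k+1)*(k+2) \<le> q*(k+2)" by (rule mult_le_mono1)
    then have "v = (k+1)*(k+2)" using v vN by linarith
    then show ?thesis by simp
  qed
qed

lemma alpha_upper:
  assumes ind: "k_independent (Vg k) (Eg k) k S"
  shows "card S \<le> (k+1)*(k+1)"
proof -
  let ?B = "\<lambda>i. {i*(k+2)..<i*(k+2)+(k+2)}"
  let ?G = "{k*(k+2)..<k*(k+2)+(k+2)} \<union> {(k+1)*(k+2)}"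
  have SV: "S \<subseteq> Vg k" using ind by (simp add: k_independent_def)
  have "S \<subseteq> (\<Union>i<k. S \<inter> ?B i) \<union> (S \<inter> ?G)" using SV cover by blast
  hence "card S \<le> card ((\<Union>i<k. S \<inter> ?B i) \<union> (S \<inter> ?G))"
    by (intro card_mono) auto
  also have "\<dots> \<le> card (\<Union>i<k. S \<inter> ?B i) + card (S \<inter> ?G)" by (rule card_Un_le)
  also have "card (\<Union>i<k. S \<inter> ?B i) \<le> (\<Sum>i<k. card (S \<inter> ?B i))"
    by (rule card_UN_le) auto
  also have "(\<Sum>i<k. card (S \<inter> ?B i)) \<le> k*(k+1)"
    using sum_bounded_above[of "{..<k}" "\<lambda>i. card (S \<inter> ?B i)" "k+1"] block_bound[OF ind]
    by simp
  also have "card (S \<inter> ?G) \<le> k+1" by (rule gadget_bound[OF ind])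
  finally show ?thesis by (simp add: algebra_simps)
qed

lemma graph_ok: "simple_graph (Vg k) (Eg k)"
  unfolding simple_graph_def
proof (rule conjI)
  show "finite (Vg k)" by (simp add: Vg_def)
  show "\<forall>e\<in>Eg k. e \<subseteq> Vg k \<and> card e = 2"
  proof
  fix e assume "e \<in> Eg k"
  then consider i j where "i \<le> k" "1 \<le> j" "j \<le> k+1" "e = {i*(k+2), i*(k+2)+j}"
    | j where "j \<le> k+1" "e = {(k+1)*(k+2), k*(k+2)+j}"
    unfolding Eg_def by auto
  then show "e \<subseteq> Vg k \<and> card e = 2"
  proof cases
    case 1
    have "i*(k+2) \<le> k*(k+2)" using 1(1) by (rule mult_le_mono1)
    then show ?thesis using 1 by (auto simp: Vg_def algebra_simps)
  next
    case 2
    then show ?thesis by (auto simp: Vg_def algebra_simps)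
  qed
  qed
qed

lemma card_Eg: "card (Eg k) \<le> card (Vg k)"
proof -
  have "card (Eg k) \<le> card ((\<lambda>(i,j). {i*(k+2), i*(k+2)+j}) ` ({..k} \<times> {1..k+1}))
        + card ((\<lambda>j. {(k+1)*(k+2), k*(k+2)+j}) ` {..k+1})"
    unfolding Eg_def by (rule card_Un_le)
  also have "\<dots> \<le> card ({..k} \<times> {1..k+1}) + card {..k+1}"
    by (intro add_mono card_image_le) auto
  also have "\<dots> = (k+1)*(k+1) + (k+2)" by (simp add: card_cartesian_product)
  also have "\<dots> = card (Vg k)" by (simp add: Vg_def algebra_simps)
  finally show ?thesis .
qed


lemma target_eq: "real (k + 1) / (real k + 2 + 1 / real (k + 1)) = real ((k+1)*(k+1)) / real (card (Vg k))"
  by (simp add: Vg_def field_simps)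

theorem mainTheorem13:
  fixes k :: nat
  assumes "k \<ge> 2"
  shows "real k / real (k + 1) \<le> f_kd k 2
         \<and> f_kd k 2 \<le> real (k + 1) / (real k + 2 + 1 / real (k + 1))"
proof
  let ?X = "{real (alpha_k V E k) / real (card V) | (V :: nat set) E.
                    simple_graph V E \<and> V \<noteq> {} \<and> avg_degree V E \<le> real 2}"
  have ne: "?X \<noteq> {}"
  proof -
    have "simple_graph {0::nat} {} \<and> {0::nat} \<noteq> {} \<and> avg_degree {0::nat} {} \<le> real 2"
      by (simp add: simple_graph_def avg_degree_def)
    then show ?thesis by blast
  qed
  show "real k / real (k + 1) \<le> f_kd k 2"
    unfolding f_kd_def
  proof (rule cInf_greatest[OF ne])
    fix x assume "x \<in> ?X"
    then obtain V E where "x = real (alpha_k V E k) / real (card (V::nat set))"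
      "simple_graph V E" "V \<noteq> {}" "avg_degree V E \<le> real 2" by blast
    then show "real k / real (k + 1) \<le> x" using lower[of V E k] by simp
  qed
  have bdd: "bdd_below ?X" by (rule bdd_belowI[of _ 0]) auto
  have fV: "finite (Vg k)" by (simp add: Vg_def)
  have pos: "card (Vg k) > 0" by (simp add: Vg_def)
  have inX: "real (alpha_k (Vg k) (Eg k) k) / real (card (Vg k)) \<in> ?X"
  proof -
    have "avg_degree (Vg k) (Eg k) \<le> real 2"
      using card_Eg[of k] pos by (simp add: avg_degree_def divide_le_eq)
    moreover have "Vg k \<noteq> {}" using pos by auto
    ultimately show ?thesis using graph_ok[of k] by blast
  qed
  have al: "alpha_k (Vg k) (Eg k) k \<le> (k+1)*(k+1)"
    unfolding alpha_k_def using alpha_facts[OF fV, of "Eg k" k] alpha_upper[of k]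
    by (subst Max_le_iff) auto
  have "f_kd k 2 \<le> real (alpha_k (Vg k) (Eg k) k) / real (card (Vg k))"
    unfolding f_kd_def by (rule cInf_lower[OF inX bdd])
  also have "\<dots> \<le> real ((k+1)*(k+1)) / real (card (Vg k))"
    using al pos by (intro divide_right_mono) (simp only: of_nat_le_iff, simp)
  also have "\<dots> = real (k + 1) / (real k + 2 + 1 / real (k + 1))" by (rule target_eq[symmetric])
  finally show "f_kd k 2 \<le> real (k + 1) / (real k + 2 + 1 / real (k + 1))" .
qed

end
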